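(* Fix a cell with no source term ($S=0$) and total energy $E=1$, a positive integer $N_{obj}$, and a finite initial population $X_0$ of $N_0$ particles with positive weights summing to $1$. Apply repeatedly (with fresh independent uniform random variables) the cell-based population control step with conservative splitting described in the context, and let $N_l$ be the number of particles after the $l$-th iteration. Then there exists $c_1>0$ such that for all $L\ge0$, $$\mathbb{P}[N_0>N_{obj},N_1>N_{obj},\dots,N_L>N_{obj}]\le e^{-c_1(L-1)}.$$ In particular, the stopping time $\tau$ defined as the first $j\ge1$ such that $N_j\le N_{obj}$ is finite with probability one.
   Context: Cell-based population control step for a single cell with existing particle weights $w_1,\dots,w_N$, $E=\sum_pw_p$, source $S\ge0$, target number $N_{obj}\ge1$ and $E+S>0$: set $w_{obj}=(E+S)/N_{obj}$; if $S>0$ emit $N^{vol}=\max(1,\lfloor S/w_{obj}\rfloor)$ particles of weight $S/N^{vol}$. If $E>0$, for each existing particle draw independently $u_p\sim\mathcal U(0,1)$, $I_p=\lfloor w_p/w_{obj}\rfloor$, $R_p=w_p/w_{obj}-I_p$; if $I_p=0$ (Russian Roulette) the particle is killed if $R_p<u_p$, otherwise its weight becomes $w_{obj}$; if $I_p\ge1$ (conservative Splitting) it is replaced by $N^{split}_p=I_p+\mathbf 1_{\{u_p<R_p\}}$ copies each of weight $w_p/N^{split}_p$. Then all weights are multiplied by a common factor so that the total is $E+S$. Non-void correction: if $S=0$ and no particle remains, the population becomes one particle of weight $E$. *)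

theory Defs
  imports "HOL-Probability.Probability"
begin

text \<open>Fate of one existing particle of weight w, given the target weight wobj
  and its uniform random number u (Russian roulette / conservative splitting).\<close>
definition particle_out :: "real \<Rightarrow> real \<Rightarrow> real \<Rightarrow> real list" where
  "particle_out wobj w u =
     (let I = nat \<lfloor>w / wobj\<rfloor>; R = w / wobj - real I in
      if I = 0 then (if R < u then [] else [wobj])
      else (let Ns = I + (if u < R then 1 else 0) in replicate Ns (w / real Ns)))"

definition pc_step :: "nat \<Rightarrow> real \<Rightarrow> real list \<Rightarrow> (nat \<Rightarrow> real) \<Rightarrow> real list" where
  "pc_step Nobj S ws u =
     (let E = sum_list ws; wobj = (E + S) / real Nobj;
          Nv = max 1 (nat \<lfloor>S / wobj\<rfloor>);
          src = (if S > 0 then replicate Nv (S / real Nv) else []);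
          ex = (if E > 0 then concat (map (\<lambda>p. particle_out wobj (ws ! p) (u p)) [0..<length ws]) else []);
          all = src @ ex;
          T = sum_list all;
          res = map (\<lambda>x. x * ((E + S) / T)) all
      in if S = 0 \<and> all = [] then [E] else res)"

text \<open>Iterated population: omega (l, p) is the uniform random number used for
  particle p in iteration l+1.\<close>
primrec pop :: "nat \<Rightarrow> real list \<Rightarrow> (nat \<times> nat \<Rightarrow> real) \<Rightarrow> nat \<Rightarrow> real list" where
  "pop Nobj X0 \<omega> 0 = X0"
| "pop Nobj X0 \<omega> (Suc l) = pc_step Nobj 0 (pop Nobj X0 \<omega> l) (\<lambda>p. \<omega> (l, p))"

definition unif_space :: "(nat \<times> nat \<Rightarrow> real) measure" where
  "unif_space = PiM UNIV (\<lambda>_. uniform_measure lborel {0..1::real})"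

end

theory Submission
  imports Defs
begin


definition pcc :: "real list \<Rightarrow> real list list \<Rightarrow> real list" where
  "pcc ws ms = (let E = sum_list ws; all = (if E > 0 then concat ms else []); T = sum_list all
     in if all = [] then [E] else map (\<lambda>x. x * (E / T)) all)"

lemma pc_step_pcc:
  "pc_step Nobj 0 ws u = pcc ws (map (\<lambda>p. particle_out (sum_list ws / real Nobj) (ws!p) (u p)) [0..<length ws])"
  by (simp add: pc_step_def pcc_def Let_def)

lemma particle_out_pos:
  assumes "wobj > 0" "w > 0" "x \<in> set (particle_out wobj w u)"
  shows "x > 0"
proof -
  have "w / wobj > 0" using assms by simp
  then have h: "0 < real_of_int \<lfloor>w / wobj\<rfloor> + 1" by linarith
  show ?thesis using assms h by (auto simp: particle_out_def Let_def split: if_splits intro!: divide_pos_pos)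
qed

lemma sum_list_pos': "xs \<noteq> [] \<Longrightarrow> \<forall>x\<in>set xs. x > (0::real) \<Longrightarrow> sum_list xs > 0"
proof (induction xs)
  case (Cons a xs) then show ?case
    by (cases "xs = []") (auto intro: add_pos_pos)
qed simp

definition valid :: "real list \<Rightarrow> bool" where
  "valid v \<longleftrightarrow> v \<noteq> [] \<and> (\<forall>w\<in>set v. w > 0)"

lemma valid_pc_step:
  assumes "valid v" "Nobj \<ge> 1"
  shows "valid (pc_step Nobj 0 v u)"
proof -
  let ?wobj = "sum_list v / real Nobj"
  let ?ms = "map (\<lambda>p. particle_out ?wobj (v!p) (u p)) [0..<length v]"
  have E: "sum_list v > 0" using assms sum_list_pos' unfolding valid_def by blast
  have wobj: "?wobj > 0" using E assms by simp
  have pos: "\<forall>x\<in>set (concat ?ms). x > 0"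
  proof
    fix x assume "x \<in> set (concat ?ms)"
    then obtain p where p: "p < length v" "x \<in> set (particle_out ?wobj (v!p) (u p))" by auto
    have "v!p > 0" using p(1) assms(1) nth_mem unfolding valid_def by blast
    then show "x > 0" using particle_out_pos[OF wobj _ p(2)] by blast
  qed
  show ?thesis
  proof (cases "concat ?ms = []")
    case True then show ?thesis using E by (simp add: pc_step_pcc pcc_def valid_def Let_def del: map_map concat_eq_Nil_conv)
  next
    case False
    have T: "sum_list (concat ?ms) > 0" using sum_list_pos'[OF False pos] .
    show ?thesis using False E T pos
      unfolding pc_step_pcc pcc_def valid_def Let_def
      by (auto simp del: map_map set_concat)
  qed
qed

lemma length_pc_step:
  assumes "valid v" "Nobj \<ge> 1" "Nobj < length (pc_step Nobj 0 v u)"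
  shows "real Nobj + 1 \<le> (\<Sum>p<length v. real (length (particle_out (sum_list v / real Nobj) (v!p) (u p))))"
proof -
  let ?wobj = "sum_list v / real Nobj"
  let ?ms = "map (\<lambda>p. particle_out ?wobj (v!p) (u p)) [0..<length v]"
  have E: "sum_list v > 0" using assms sum_list_pos' unfolding valid_def by blast
  have ne: "concat ?ms \<noteq> []"
  proof
    assume "concat ?ms = []"
    then have "pc_step Nobj 0 v u = [sum_list v]" using E by (simp add: pc_step_pcc pcc_def Let_def del: map_map concat_eq_Nil_conv)
    then show False using assms by simp
  qed
  have "length (pc_step Nobj 0 v u) = length (concat ?ms)"
    using ne E by (simp add: pc_step_pcc pcc_def Let_def del: map_map concat_eq_Nil_conv)
  also have "\<dots> = (\<Sum>p<length v. length (particle_out ?wobj (v!p) (u p)))"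
    by (simp add: length_concat sum_list_sum_nth lessThan_atLeast0)
  finally show ?thesis using assms(3) by (simp flip: of_nat_sum)
qed

lemma finite_range_particle_out: "finite (range (particle_out wobj w))"
proof -
  have "range (particle_out wobj w) \<subseteq> {[], [wobj], replicate (nat \<lfloor>w / wobj\<rfloor>) (w / real (nat \<lfloor>w / wobj\<rfloor>)),
     replicate (nat \<lfloor>w / wobj\<rfloor> + 1) (w / real (nat \<lfloor>w / wobj\<rfloor> + 1))}"
    by (auto simp: particle_out_def Let_def)
  then show ?thesis by (rule finite_subset) simp
qed



definition U :: "real measure" where "U = uniform_measure lborel {0..1::real}"

lemma unif_space_U: "unif_space = PiM UNIV (\<lambda>_. U)"
  by (simp add: unif_space_def U_def)

lemma prob_space_U: "prob_space U"
  unfolding U_def by (rule prob_space_uniform_measure) auto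

lemma sets_U[simp, measurable_cong]: "sets U = sets borel"
  by (simp add: U_def)

lemma space_U[simp]: "space U = UNIV"
  by (simp add: U_def)

lemma prob_space_unif: "prob_space unif_space"
  unfolding unif_space_U by (rule prob_space_PiM) (rule prob_space_U)

lemma space_unif[simp]: "space unif_space = UNIV"
  by (simp add: unif_space_U space_PiM)

lemma meas_countable_range:
  assumes "countable (f ` space M)" "\<And>y. f -` {y} \<inter> space M \<in> sets M"
  shows "f \<in> M \<rightarrow>\<^sub>M count_space UNIV"
proof (rule measurableI)
  fix A
  have "f -` A \<inter> space M = (\<Union>y\<in>A \<inter> f ` space M. f -` {y} \<inter> space M)" by auto
  also have "\<dots> \<in> sets M" using assms by (intro sets.countable_UN') auto
  finally show "f -` A \<inter> space M \<in> sets M" .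
qed simp

lemma particle_out_meas: "particle_out wobj w \<in> borel \<rightarrow>\<^sub>M count_space UNIV"
  unfolding particle_out_def Let_def by measurable

lemma measure_U_le: "0 \<le> R \<Longrightarrow> R \<le> 1 \<Longrightarrow> measure U {..R} = R"
proof -
  assume "0 \<le> R" "R \<le> 1"
  then have "{0..1} \<inter> {..R} = {0..R}" by auto
  then show ?thesis using \<open>0 \<le> R\<close> by (simp add: U_def)
qed

lemma measure_U_less: "0 \<le> R \<Longrightarrow> R \<le> 1 \<Longrightarrow> measure U {..<R} = R"
proof -
  assume "0 \<le> R" "R \<le> 1"
  then have "{0..1} \<inter> {..<R} = {0..<R}" by auto
  then show ?thesis using \<open>0 \<le> R\<close> by (simp add: U_def)
qed

lemma integral_particle_out:
  assumes "wobj > 0" "w > 0"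
  shows "(\<integral>x. real (length (particle_out wobj w x)) \<partial>U) = w / wobj"
proof -
  interpret U: prob_space U by (rule prob_space_U)
  define I where "I = nat \<lfloor>w / wobj\<rfloor>"
  define R where "R = w / wobj - real I"
  have "w / wobj > 0" using assms by simp
  then have I': "real I = of_int \<lfloor>w / wobj\<rfloor>" unfolding I_def by simp
  have R: "0 \<le> R" "R < 1" unfolding R_def I' by linarith+
  show ?thesis
  proof (cases "I = 0")
    case True
    have po: "particle_out wobj w x = (if R < x then [] else [wobj])" for x
      unfolding particle_out_def Let_def I_def[symmetric] R_def[symmetric] using True by simp
    have "(\<lambda>x. real (length (particle_out wobj w x))) = indicator {..R}"
      by (auto simp: po indicator_def)
    then show ?thesis using R True by (simp add: measure_U_le R_def)
  next
    case False
    have po: "particle_out wobj w x = replicate (I + (if x < R then 1 else 0)) (w / real (I + (if x < R then 1 else 0)))" for x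
      unfolding particle_out_def Let_def I_def[symmetric] R_def[symmetric] using False by simp
    have "(\<lambda>x. real (length (particle_out wobj w x))) = (\<lambda>x. real I + indicator {..<R} x)"
      by (auto simp: po indicator_def)
    moreover have "(\<integral>x. real I + indicator {..<R} x \<partial>U) = real I + R"
    proof -
      have i1: "integrable U (\<lambda>x. real I)" by simp
      have i2: "integrable U (indicator {..<R} :: real \<Rightarrow> real)"
        by (rule integrable_real_indicator) (auto simp: U.emeasure_eq_measure)
      have "(\<integral>x. real I + indicator {..<R} x \<partial>U) = (\<integral>x. real I \<partial>U) + (\<integral>x. indicator {..<R} x \<partial>U)"
        by (rule Bochner_Integration.integral_add[OF i1 i2])
      also have "\<dots> = real I + R" using R U.prob_space by (simp add: measure_U_less)
      finally show ?thesis .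
    qed
    ultimately show ?thesis by (simp add: R_def)
  qed
qed



lemma pop_dep:
  "(\<And>k p. k < l \<Longrightarrow> \<omega> (k,p) = \<omega>' (k,p)) \<Longrightarrow> pop Nobj X0 \<omega> l = pop Nobj X0 \<omega>' l"
proof (induction l)
  case (Suc l)
  then have "pop Nobj X0 \<omega> l = pop Nobj X0 \<omega>' l" by simp
  moreover have "(\<lambda>p. \<omega> (l, p)) = (\<lambda>p. \<omega>' (l, p))" using Suc.prems by auto
  ultimately show ?case by simp
qed simp

lemma valid_pop: "valid X0 \<Longrightarrow> Nobj \<ge> 1 \<Longrightarrow> valid (pop Nobj X0 \<omega> l)"
  by (induction l) (auto intro: valid_pc_step)

lemma finite_range_pc: "finite (range (\<lambda>u. pc_step Nobj 0 v u))"
proof -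
  let ?wobj = "sum_list v / real Nobj"
  let ?A = "\<Union>p<length v. range (particle_out ?wobj (v!p))"
  have fA: "finite ?A" using finite_range_particle_out by blast
  have "pc_step Nobj 0 v u \<in> pcc v ` {ms. set ms \<subseteq> ?A \<and> length ms = length v}" for u
  proof -
    have "set (map (\<lambda>p. particle_out ?wobj (v!p) (u p)) [0..<length v]) \<subseteq> ?A"
    proof
      fix x assume "x \<in> set (map (\<lambda>p. particle_out ?wobj (v!p) (u p)) [0..<length v])"
      then obtain p where "p < length v" "x = particle_out ?wobj (v!p) (u p)" by auto
      then show "x \<in> ?A" by blast
    qed
    then show ?thesis unfolding pc_step_pcc by (intro imageI) simp
  qed
  then have "range (\<lambda>u. pc_step Nobj 0 v u) \<subseteq> pcc v ` {ms. set ms \<subseteq> ?A \<and> length ms = length v}"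
    by blast
  moreover have "finite {ms. set ms \<subseteq> ?A \<and> length ms = length v}"
    using finite_lists_length_eq[OF fA] .
  ultimately show ?thesis by (meson finite_imageI finite_subset)
qed

lemma countable_range_pop: "countable (range (\<lambda>\<omega>. pop Nobj X0 \<omega> L))"
proof (induction L)
  case 0 then show ?case by simp
next
  case (Suc L)
  have "range (\<lambda>\<omega>. pop Nobj X0 \<omega> (Suc L)) \<subseteq> (\<Union>v\<in>range (\<lambda>\<omega>. pop Nobj X0 \<omega> L). range (\<lambda>u. pc_step Nobj 0 v u))"
    by auto
  moreover have "countable (\<Union>v\<in>range (\<lambda>\<omega>. pop Nobj X0 \<omega> L). range (\<lambda>u. pc_step Nobj 0 v u))"
    using Suc finite_range_pc by (intro countable_UN) (auto intro: countable_finite)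
  ultimately show ?case by (rule countable_subset)
qed

lemma map_upt_eq: "length y = n \<Longrightarrow> (map g [0..<n] = y) = (\<forall>p<n. g p = y!p)"
  by (auto simp: list_eq_iff_nth_eq)

lemma map_meas:
  assumes "\<And>p. p < n \<Longrightarrow> f p \<in> M \<rightarrow>\<^sub>M count_space UNIV"
    and "\<And>p. p < n \<Longrightarrow> finite (range (f p))"
  shows "(\<lambda>\<omega>. map (\<lambda>p. f p \<omega>) [0..<n]) \<in> M \<rightarrow>\<^sub>M count_space UNIV"
proof (rule meas_countable_range)
  let ?A = "\<Union>p<n. range (f p)"
  have fA: "finite ?A" using assms(2) by blast
  have "map (\<lambda>p. f p \<omega>) [0..<n] \<in> {ms. set ms \<subseteq> ?A \<and> length ms = n}" for \<omega>
  proof -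
    have "set (map (\<lambda>p. f p \<omega>) [0..<n]) \<subseteq> ?A"
    proof
      fix x assume "x \<in> set (map (\<lambda>p. f p \<omega>) [0..<n])"
      then obtain p where "p < n" "x = f p \<omega>" by auto
      then show "x \<in> ?A" by blast
    qed
    then show ?thesis by simp
  qed
  then have "(\<lambda>\<omega>. map (\<lambda>p. f p \<omega>) [0..<n]) ` space M \<subseteq> {ms. set ms \<subseteq> ?A \<and> length ms = n}"
    by blast
  then show "countable ((\<lambda>\<omega>. map (\<lambda>p. f p \<omega>) [0..<n]) ` space M)"
    using finite_lists_length_eq[OF fA] by (meson countable_finite finite_subset)
next
  fix y :: "'b list"
  show "(\<lambda>\<omega>. map (\<lambda>p. f p \<omega>) [0..<n]) -` {y} \<inter> space M \<in> sets M"
  proof (cases "length y = n")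
    case True
    have "(\<lambda>\<omega>. map (\<lambda>p. f p \<omega>) [0..<n]) -` {y} \<inter> space M = space M \<inter> (\<Inter>p\<in>{..<n}. f p -` {y!p} \<inter> space M)"
      by (auto simp: map_upt_eq[OF True])
    also have "\<dots> \<in> sets M"
    proof (cases "n = 0")
      case True then show ?thesis by simp
    next
      case False
      show ?thesis
        by (rule sets.Int[OF sets.top sets.finite_INT]) (use False assms(1) measurable_sets in auto)
    qed
    finally show ?thesis .
  next
    case False
    then have "(\<lambda>\<omega>. map (\<lambda>p. f p \<omega>) [0..<n]) -` {y} \<inter> space M = {}" by auto
    then show ?thesis by simp
  qed
qed

lemma row_meas: "(\<lambda>\<omega>. f (\<omega> (L, p))) \<in> unif_space \<rightarrow>\<^sub>M count_space UNIV"
  if "f \<in> borel \<rightarrow>\<^sub>M count_space UNIV" for f :: "real \<Rightarrow> 'a"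
proof -
  have "(\<lambda>\<omega>. \<omega> (L, p)) \<in> unif_space \<rightarrow>\<^sub>M U"
    unfolding unif_space_U by (rule measurable_component_singleton) simp
  then have "(\<lambda>\<omega>. \<omega> (L, p)) \<in> unif_space \<rightarrow>\<^sub>M borel"
    by (simp cong: measurable_cong_sets)
  then show ?thesis using that by (rule measurable_compose)
qed

lemma step_meas: "(\<lambda>\<omega>. pc_step Nobj 0 v (\<lambda>p. \<omega> (L, p))) \<in> unif_space \<rightarrow>\<^sub>M count_space UNIV"
proof -
  let ?wobj = "sum_list v / real Nobj"
  have "(\<lambda>\<omega>. map (\<lambda>p. particle_out ?wobj (v!p) (\<omega> (L,p))) [0..<length v]) \<in> unif_space \<rightarrow>\<^sub>M count_space UNIV"
  proof (rule map_meas)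
    fix p
    show "(\<lambda>\<omega>. particle_out ?wobj (v!p) (\<omega> (L,p))) \<in> unif_space \<rightarrow>\<^sub>M count_space UNIV"
      by (intro row_meas particle_out_meas)
    have "range (\<lambda>\<omega>::nat\<times>nat\<Rightarrow>real. particle_out ?wobj (v!p) (\<omega> (L,p))) \<subseteq> range (particle_out ?wobj (v!p))"
      by auto
    then show "finite (range (\<lambda>\<omega>::nat\<times>nat\<Rightarrow>real. particle_out ?wobj (v!p) (\<omega> (L,p))))"
      using finite_range_particle_out finite_subset by blast
  qed
  then have "(\<lambda>\<omega>. pcc v (map (\<lambda>p. particle_out ?wobj (v!p) (\<omega> (L,p))) [0..<length v])) \<in> unif_space \<rightarrow>\<^sub>M count_space UNIV"
    by (rule measurable_compose) simp
  then show ?thesis unfolding pc_step_pcc by (simp del: map_map)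
qed

lemma pop_meas: "(\<lambda>\<omega>. pop Nobj X0 \<omega> L) \<in> unif_space \<rightarrow>\<^sub>M count_space UNIV"
proof (induction L)
  case 0 then show ?case by simp
next
  case (Suc L)
  show ?case
  proof (rule meas_countable_range)
    show "countable ((\<lambda>\<omega>. pop Nobj X0 \<omega> (Suc L)) ` space unif_space)"
      unfolding space_unif by (rule countable_range_pop)
  next
    fix y
    have "(\<lambda>\<omega>. pop Nobj X0 \<omega> (Suc L)) -` {y} \<inter> space unif_space =
      (\<Union>v\<in>range (\<lambda>\<omega>. pop Nobj X0 \<omega> L). ((\<lambda>\<omega>. pop Nobj X0 \<omega> L) -` {v} \<inter> space unif_space) \<inter>
          ((\<lambda>\<omega>. pc_step Nobj 0 v (\<lambda>p. \<omega> (L, p))) -` {y} \<inter> space unif_space))"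
      by auto
    also have "\<dots> \<in> sets unif_space"
    proof (rule sets.countable_UN''[where X="range (\<lambda>\<omega>. pop Nobj X0 \<omega> L)"])
      show "countable (range (\<lambda>\<omega>. pop Nobj X0 \<omega> L))" by (rule countable_range_pop)
    next
      fix v
      have 1: "(\<lambda>\<omega>. pop Nobj X0 \<omega> L) -` {v} \<inter> space unif_space \<in> sets unif_space"
        by (rule measurable_sets[OF Suc]) simp
      have 2: "(\<lambda>\<omega>. pc_step Nobj 0 v (\<lambda>p. \<omega> (L, p))) -` {y} \<inter> space unif_space \<in> sets unif_space"
        by (rule measurable_sets[OF step_meas]) simp
      show "((\<lambda>\<omega>. pop Nobj X0 \<omega> L) -` {v} \<inter> space unif_space) \<inter>
          ((\<lambda>\<omega>. pc_step Nobj 0 v (\<lambda>p. \<omega> (L, p))) -` {y} \<inter> space unif_space) \<in> sets unif_space"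
        using 1 2 by (rule sets.Int)
    qed
    finally show "(\<lambda>\<omega>. pop Nobj X0 \<omega> (Suc L)) -` {y} \<inter> space unif_space \<in> sets unif_space" .
  qed
qed



lemma indep_split:
  fixes A B :: "(nat \<times> nat) set"
  assumes C: "C \<in> sets unif_space" and D: "D \<in> sets unif_space" and AB: "A \<inter> B = {}"
   and Cdep: "\<And>\<omega> \<omega>'. (\<forall>i\<in>A. \<omega> i = \<omega>' i) \<Longrightarrow> \<omega> \<in> C \<Longrightarrow> \<omega>' \<in> C"
   and Ddep: "\<And>\<omega> \<omega>'. (\<forall>i\<in>B. \<omega> i = \<omega>' i) \<Longrightarrow> \<omega> \<in> D \<Longrightarrow> \<omega>' \<in> D"
  shows "measure unif_space (C \<inter> D) = measure unif_space C * measure unif_space D"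
proof -
  interpret M: prob_space unif_space by (rule prob_space_unif)
  have comp: "(\<lambda>\<omega>. \<omega> i) \<in> unif_space \<rightarrow>\<^sub>M U" for i
    unfolding unif_space_U by (rule measurable_component_singleton) simp
  have ind: "M.indep_vars (\<lambda>_. U) (\<lambda>i \<omega>. \<omega> i) UNIV"
  proof (subst M.indep_vars_iff_distr_eq_PiM)
    show "distr unif_space (Pi\<^sub>M UNIV (\<lambda>_. U)) (\<lambda>x. restrict (\<lambda>i. x i) UNIV) =
      Pi\<^sub>M UNIV (\<lambda>i. distr unif_space U (\<lambda>\<omega>. \<omega> i))"
    proof -
      have r: "(\<lambda>x. restrict (\<lambda>i. x i) UNIV) = (\<lambda>x::nat\<times>nat\<Rightarrow>real. x)" by (simp add: restrict_def)
      have d: "distr (PiM UNIV (\<lambda>_. U)) U (\<lambda>\<omega>. \<omega> i) = U" for i :: "nat \<times> nat"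
        by (rule distr_PiM_component) (auto simp: prob_space_U)
      show ?thesis unfolding r unif_space_U d by simp
    qed
  qed (auto intro: comp)
  have iv: "M.indep_var (PiM A (\<lambda>_. U)) (\<lambda>\<omega>. restrict (\<lambda>i. \<omega> i) A) (PiM B (\<lambda>_. U)) (\<lambda>\<omega>. restrict (\<lambda>i. \<omega> i) B)"
    by (rule M.indep_var_restrict[OF ind AB]) auto
  define ext where "ext K x = (\<lambda>i. if i \<in> K then x i else (0::real))" for K :: "(nat \<times> nat) set" and x
  have ext_meas: "ext K \<in> PiM K (\<lambda>_. U) \<rightarrow>\<^sub>M unif_space" for K
    unfolding unif_space_U ext_def
  proof (rule measurable_PiM_single')
    fix i :: "nat \<times> nat"
    show "(\<lambda>x. if i \<in> K then x i else 0) \<in> Pi\<^sub>M K (\<lambda>_. U) \<rightarrow>\<^sub>M U"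
      by (cases "i \<in> K") (auto intro: measurable_component_singleton)
  qed (auto simp: space_PiM)
  define C' where "C' = ext A -` C \<inter> space (PiM A (\<lambda>_. U))"
  define D' where "D' = ext B -` D \<inter> space (PiM B (\<lambda>_. U))"
  have C': "C' \<in> sets (PiM A (\<lambda>_. U))" unfolding C'_def by (rule measurable_sets[OF ext_meas C])
  have D': "D' \<in> sets (PiM B (\<lambda>_. U))" unfolding D'_def by (rule measurable_sets[OF ext_meas D])
  have inC: "restrict \<omega> A \<in> C' \<longleftrightarrow> \<omega> \<in> C" for \<omega>
  proof -
    have agree: "\<forall>i\<in>A. ext A (restrict \<omega> A) i = \<omega> i" by (simp add: ext_def)
    have "restrict \<omega> A \<in> space (PiM A (\<lambda>_. U))" by (simp add: space_PiM)
    then show ?thesis unfolding C'_def using Cdep[OF agree] Cdep[of \<omega> "ext A (restrict \<omega> A)"] agree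
      by auto
  qed
  have inD: "restrict \<omega> B \<in> D' \<longleftrightarrow> \<omega> \<in> D" for \<omega>
  proof -
    have agree: "\<forall>i\<in>B. ext B (restrict \<omega> B) i = \<omega> i" by (simp add: ext_def)
    have "restrict \<omega> B \<in> space (PiM B (\<lambda>_. U))" by (simp add: space_PiM)
    then show ?thesis unfolding D'_def using Ddep[OF agree] Ddep[of \<omega> "ext B (restrict \<omega> B)"] agree
      by auto
  qed
  have "M.prob ((\<lambda>x. (restrict (\<lambda>i. x i) A, restrict (\<lambda>i. x i) B)) -` (C' \<times> D') \<inter> space unif_space) =
    M.prob ((\<lambda>x. restrict (\<lambda>i. x i) A) -` C' \<inter> space unif_space) * M.prob ((\<lambda>x. restrict (\<lambda>i. x i) B) -` D' \<inter> space unif_space)"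
    by (rule M.indep_varD[OF iv C' D'])
  moreover have "(\<lambda>x. (restrict (\<lambda>i. x i) A, restrict (\<lambda>i. x i) B)) -` (C' \<times> D') \<inter> space unif_space = C \<inter> D"
    using inC inD by auto
  moreover have "(\<lambda>x. restrict (\<lambda>i. x i) A) -` C' \<inter> space unif_space = C" using inC by auto
  moreover have "(\<lambda>x. restrict (\<lambda>i. x i) B) -` D' \<inter> space unif_space = D" using inD by auto
  ultimately show ?thesis by simp
qed



lemma length_particle_out_le: "length (particle_out wobj w x) \<le> nat \<lfloor>w / wobj\<rfloor> + 1"
  by (auto simp: particle_out_def Let_def)

lemma integral_row:
  fixes g :: "real \<Rightarrow> real"
  assumes "g \<in> borel_measurable borel"
  shows "(\<integral>\<omega>. g (\<omega> (L, p)) \<partial>unif_space) = (\<integral>x. g x \<partial>U)"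
proof -
  have d: "distr unif_space U (\<lambda>\<omega>. \<omega> (L, p)) = U"
    unfolding unif_space_U by (rule distr_PiM_component) (auto simp: prob_space_U)
  have m: "(\<lambda>\<omega>. \<omega> (L, p)) \<in> unif_space \<rightarrow>\<^sub>M U"
    unfolding unif_space_U by (rule measurable_component_singleton) simp
  have g: "g \<in> borel_measurable U" using assms by (simp cong: measurable_cong_sets)
  show ?thesis
    using integral_distr[OF m g] d by simp
qed

lemma step_prob:
  assumes v: "valid v" and N: "Nobj \<ge> 1"
  shows "measure unif_space {\<omega>. Nobj < length (pc_step Nobj 0 v (\<lambda>p. \<omega> (L,p)))} \<le> real Nobj / (real Nobj + 1)"
proof -
  interpret M: prob_space unif_space by (rule prob_space_unif)
  let ?wobj = "sum_list v / real Nobj"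
  define f where "f p x = real (length (particle_out ?wobj (v!p) x))" for p x
  define X where "X \<omega> = (\<Sum>p<length v. f p (\<omega> (L, p)))" for \<omega> :: "nat \<times> nat \<Rightarrow> real"
  have E: "sum_list v > 0" using v sum_list_pos' unfolding valid_def by blast
  have wobj: "?wobj > 0" using E N by simp
  have vpos: "p < length v \<Longrightarrow> v!p > 0" for p using v nth_mem unfolding valid_def by blast
  have fmeas: "f p \<in> borel_measurable borel" for p
  proof -
    have "(\<lambda>l. real (length l)) \<in> count_space UNIV \<rightarrow>\<^sub>M (borel :: real measure)" by simp
    then show ?thesis unfolding f_def using particle_out_meas by (rule measurable_compose[rotated])
  qed
  have fint: "integrable unif_space (\<lambda>\<omega>. f p (\<omega> (L, p)))" for p
  proof (rule M.integrable_const_bound[where B="real (nat \<lfloor>v!p / ?wobj\<rfloor> + 1)"])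
    show "AE x in unif_space. norm (f p (x (L, p))) \<le> real (nat \<lfloor>v!p / ?wobj\<rfloor> + 1)"
    proof (rule AE_I2)
      fix x :: "nat \<times> nat \<Rightarrow> real"
      show "norm (f p (x (L, p))) \<le> real (nat \<lfloor>v!p / ?wobj\<rfloor> + 1)"
        unfolding f_def norm_of_nat of_nat_le_iff by (rule length_particle_out_le)
    qed
    have "(\<lambda>\<omega>. \<omega> (L, p)) \<in> unif_space \<rightarrow>\<^sub>M U"
      unfolding unif_space_U by (rule measurable_component_singleton) simp
    then have "(\<lambda>\<omega>. \<omega> (L, p)) \<in> unif_space \<rightarrow>\<^sub>M borel"
      by (simp cong: measurable_cong_sets)
    then show "(\<lambda>\<omega>. f p (\<omega> (L, p))) \<in> borel_measurable unif_space"
      using fmeas by (rule measurable_compose)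
  qed
  have Xint: "integrable unif_space X" unfolding X_def by (intro Bochner_Integration.integrable_sum fint)
  have "(\<integral>\<omega>. X \<omega> \<partial>unif_space) = (\<Sum>p<length v. \<integral>\<omega>. f p (\<omega> (L, p)) \<partial>unif_space)"
    unfolding X_def by (rule Bochner_Integration.integral_sum) (rule fint)
  also have "\<dots> = (\<Sum>p<length v. v!p / ?wobj)"
  proof (rule sum.cong)
    fix p assume "p \<in> {..<length v}"
    then have "v!p > 0" using vpos by simp
    then show "(\<integral>\<omega>. f p (\<omega> (L, p)) \<partial>unif_space) = v!p / ?wobj"
    proof -
      have "(\<integral>\<omega>. f p (\<omega> (L, p)) \<partial>unif_space) = (\<integral>x. f p x \<partial>U)" by (rule integral_row[OF fmeas])
      also have "\<dots> = v!p / ?wobj" unfolding f_def by (rule integral_particle_out[OF wobj \<open>v!p > 0\<close>])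
      finally show ?thesis .
    qed
  qed simp
  also have "\<dots> = sum_list v / ?wobj"
    by (simp add: sum_list_sum_nth lessThan_atLeast0 sum_divide_distrib)
  also have "\<dots> = real Nobj" using E N by simp
  finally have EX: "(\<integral>\<omega>. X \<omega> \<partial>unif_space) = real Nobj" .
  have sub: "{\<omega>. Nobj < length (pc_step Nobj 0 v (\<lambda>p. \<omega> (L,p)))} \<subseteq> {\<omega> \<in> space unif_space. X \<omega> \<ge> real Nobj + 1}"
    using length_pc_step[OF v N] unfolding X_def f_def by auto
  have "{\<omega> \<in> space unif_space. X \<omega> \<ge> real Nobj + 1} \<in> sets unif_space"
    using Xint by measurable
  then have "measure unif_space {\<omega>. Nobj < length (pc_step Nobj 0 v (\<lambda>p. \<omega> (L,p)))} \<le>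
      measure unif_space {\<omega> \<in> space unif_space. X \<omega> \<ge> real Nobj + 1}"
    using sub by (rule M.finite_measure_mono[rotated])
  also have "\<dots> \<le> (\<integral>\<omega>. X \<omega> \<partial>unif_space) / (real Nobj + 1)"
    by (rule integral_Markov_inequality_measure[OF Xint sets.top])
       (auto simp: X_def f_def intro!: sum_nonneg)
  finally show ?thesis using EX by simp
qed



definition BB :: "nat \<Rightarrow> real list \<Rightarrow> nat \<Rightarrow> (nat \<times> nat \<Rightarrow> real) set" where
  "BB Nobj X0 L = {\<omega> \<in> space unif_space. \<forall>l. 1 \<le> l \<and> l \<le> L \<longrightarrow> Nobj < length (pop Nobj X0 \<omega> l)}"

lemma BB_0: "BB Nobj X0 0 = space unif_space"
  by (auto simp: BB_def)

lemma BB_Suc: "BB Nobj X0 (Suc L) = BB Nobj X0 L \<inter> {\<omega>. Nobj < length (pop Nobj X0 \<omega> (Suc L))}"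
  by (auto simp: BB_def le_Suc_eq)

lemma pop_pred_sets: "{\<omega>. P (pop Nobj X0 \<omega> l)} \<in> sets unif_space"
proof -
  have "(\<lambda>\<omega>. pop Nobj X0 \<omega> l) -` {xs. P xs} \<inter> space unif_space \<in> sets unif_space"
    by (rule measurable_sets[OF pop_meas]) simp
  moreover have "(\<lambda>\<omega>. pop Nobj X0 \<omega> l) -` {xs. P xs} \<inter> space unif_space = {\<omega>. P (pop Nobj X0 \<omega> l)}"
    by auto
  ultimately show ?thesis by simp
qed

lemma BB_sets: "BB Nobj X0 L \<in> sets unif_space"
proof (induction L)
  case 0 then show ?case unfolding BB_0 by (rule sets.top)
next
  case (Suc L) then show ?case unfolding BB_Suc by (intro sets.Int pop_pred_sets)
qed

lemma BB_step:
  assumes X0: "valid X0" and N: "Nobj \<ge> 1"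
  shows "measure unif_space (BB Nobj X0 (Suc L)) \<le> real Nobj / (real Nobj + 1) * measure unif_space (BB Nobj X0 L)"
proof -
  interpret M: prob_space unif_space by (rule prob_space_unif)
  let ?q = "real Nobj / (real Nobj + 1)"
  let ?S = "range (\<lambda>\<omega>. pop Nobj X0 \<omega> L)"
  define C where "C v = BB Nobj X0 L \<inter> {\<omega>. pop Nobj X0 \<omega> L = v}" for v
  define D where "D v = {\<omega>. Nobj < length (pc_step Nobj 0 v (\<lambda>p. \<omega> (L,p)))}" for v
  have cS: "countable ?S" by (rule countable_range_pop)
  have Csets: "C v \<in> sets unif_space" for v
    unfolding C_def by (intro sets.Int BB_sets pop_pred_sets)
  have Dsets: "D v \<in> sets unif_space" for v
  proof -
    have "(\<lambda>\<omega>. pc_step Nobj 0 v (\<lambda>p. \<omega> (L, p))) -` {xs. Nobj < length xs} \<inter> space unif_space \<in> sets unif_space"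
      by (rule measurable_sets[OF step_meas]) simp
    moreover have "(\<lambda>\<omega>. pc_step Nobj 0 v (\<lambda>p. \<omega> (L, p))) -` {xs. Nobj < length xs} \<inter> space unif_space = D v"
      unfolding D_def by auto
    ultimately show ?thesis by simp
  qed
  have CDsets: "C v \<inter> D v \<in> sets unif_space" for v using Csets Dsets by (rule sets.Int)
  have indep: "measure unif_space (C v \<inter> D v) = measure unif_space (C v) * measure unif_space (D v)" for v
  proof (rule indep_split[OF Csets Dsets, of "{(k,p). k < L}" "{(k,p). k = L}"])
    show "{(k, p). k < L} \<inter> {(k, p). k = L} = {}" by auto
  next
    fix \<omega> \<omega>' :: "nat \<times> nat \<Rightarrow> real"
    assume agree: "\<forall>i\<in>{(k, p). k < L}. \<omega> i = \<omega>' i" and "\<omega> \<in> C v"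
    have eq: "pop Nobj X0 \<omega> l = pop Nobj X0 \<omega>' l" if "l \<le> L" for l
      by (rule pop_dep) (use agree that in auto)
    show "\<omega>' \<in> C v" using \<open>\<omega> \<in> C v\<close> eq unfolding C_def BB_def by auto
  next
    fix \<omega> \<omega>' :: "nat \<times> nat \<Rightarrow> real"
    assume agree: "\<forall>i\<in>{(k, p). k = L}. \<omega> i = \<omega>' i" and "\<omega> \<in> D v"
    then have "(\<lambda>p. \<omega> (L, p)) = (\<lambda>p. \<omega>' (L, p))" by auto
    then show "\<omega>' \<in> D v" using \<open>\<omega> \<in> D v\<close> unfolding D_def by simp
  qed
  have Dle: "measure unif_space (D v) \<le> ?q" if "v \<in> ?S" for v
  proof -
    from that obtain \<omega> where "v = pop Nobj X0 \<omega> L" by auto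
    then have "valid v" using valid_pop[OF X0 N] by simp
    then show ?thesis unfolding D_def by (rule step_prob[OF _ N])
  qed
  have disjC: "disjoint_family_on C ?S" unfolding disjoint_family_on_def C_def by auto
  have disjCD: "disjoint_family_on (\<lambda>v. C v \<inter> D v) ?S" unfolding disjoint_family_on_def C_def by auto
  have BL: "BB Nobj X0 L = (\<Union>v\<in>?S. C v)" unfolding C_def by auto
  have BSL: "BB Nobj X0 (Suc L) = (\<Union>v\<in>?S. C v \<inter> D v)" unfolding C_def D_def BB_Suc by auto
  have "emeasure unif_space (BB Nobj X0 (Suc L)) = (\<integral>\<^sup>+v. emeasure unif_space (C v \<inter> D v) \<partial>count_space ?S)"
    unfolding BSL by (rule emeasure_UN_countable[OF CDsets cS disjCD])
  also have "\<dots> \<le> (\<integral>\<^sup>+v. ennreal ?q * emeasure unif_space (C v) \<partial>count_space ?S)"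
  proof (rule nn_integral_mono)
    fix v assume "v \<in> space (count_space ?S)"
    then have "v \<in> ?S" by simp
    have "emeasure unif_space (C v \<inter> D v) = ennreal (measure unif_space (C v) * measure unif_space (D v))"
      by (simp add: M.emeasure_eq_measure indep)
    also have "\<dots> \<le> ennreal (?q * measure unif_space (C v))"
    proof (rule ennreal_leI)
      have "measure unif_space (C v) * measure unif_space (D v) \<le> measure unif_space (C v) * ?q"
        using Dle[OF \<open>v \<in> ?S\<close>] by (intro mult_left_mono) auto
      then show "measure unif_space (C v) * measure unif_space (D v) \<le> ?q * measure unif_space (C v)"
        by (simp add: mult.commute)
    qed
    also have "\<dots> = ennreal ?q * emeasure unif_space (C v)"
      by (simp only: M.emeasure_eq_measure) (rule ennreal_mult; simp)
    finally show "emeasure unif_space (C v \<inter> D v) \<le> ennreal ?q * emeasure unif_space (C v)" .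
  qed
  also have "\<dots> = ennreal ?q * (\<integral>\<^sup>+v. emeasure unif_space (C v) \<partial>count_space ?S)"
    by (rule nn_integral_cmult) simp
  also have "(\<integral>\<^sup>+v. emeasure unif_space (C v) \<partial>count_space ?S) = emeasure unif_space (BB Nobj X0 L)"
    unfolding BL by (rule emeasure_UN_countable[OF Csets cS disjC, symmetric])
  also have "ennreal ?q * emeasure unif_space (BB Nobj X0 L) = ennreal (?q * measure unif_space (BB Nobj X0 L))"
    by (simp only: M.emeasure_eq_measure) (rule ennreal_mult[symmetric]; simp)
  finally have "ennreal (measure unif_space (BB Nobj X0 (Suc L))) \<le> ennreal (?q * measure unif_space (BB Nobj X0 L))"
    by (simp only: M.emeasure_eq_measure)
  then show ?thesis by (rule ennreal_le_iff[THEN iffD1, rotated]) simp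
qed

lemma BB_bound:
  assumes X0: "valid X0" and N: "Nobj \<ge> 1"
  shows "measure unif_space (BB Nobj X0 L) \<le> (real Nobj / (real Nobj + 1)) ^ L"
proof (induction L)
  case 0
  interpret M: prob_space unif_space by (rule prob_space_unif)
  show ?case by (simp add: BB_0)
next
  case (Suc L)
  have "measure unif_space (BB Nobj X0 (Suc L)) \<le> real Nobj / (real Nobj + 1) * measure unif_space (BB Nobj X0 L)"
    by (rule BB_step[OF X0 N])
  also have "\<dots> \<le> real Nobj / (real Nobj + 1) * (real Nobj / (real Nobj + 1)) ^ L"
    using Suc by (intro mult_left_mono) auto
  finally show ?case by simp
qed



theorem lemma3:
  fixes Nobj :: nat and X0 :: "real list"
  assumes "Nobj \<ge> 1"
    and "\<forall>w \<in> set X0. w > 0"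
    and "sum_list X0 = 1"
  shows "(\<exists>c1 > 0. \<forall>L :: nat.
           measure unif_space {\<omega> \<in> space unif_space. \<forall>l \<le> L. length (pop Nobj X0 \<omega> l) > Nobj}
             \<le> exp (- c1 * (real L - 1)))
    \<and> (AE \<omega> in unif_space. \<exists>j \<ge> 1. length (pop Nobj X0 \<omega> j) \<le> Nobj)"
proof -
  interpret M: prob_space unif_space by (rule prob_space_unif)
  have N: "Nobj \<ge> 1" by fact
  have X0: "valid X0" unfolding valid_def using assms(2,3) by auto
  define q where "q = real Nobj / (real Nobj + 1)"
  define c1 where "c1 = ln ((real Nobj + 1) / real Nobj)"
  have q0: "0 < q" and q1: "q < 1" using N by (auto simp: q_def)
  have c1: "c1 > 0" using N by (simp add: c1_def)
  have eq: "exp (- c1) = q" using N by (simp add: c1_def q_def exp_minus)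
  have qL: "q ^ L = exp (- c1 * real L)" for L
  proof -
    have "exp (- c1 * real L) = exp (real L * (- c1))" by (simp add: mult.commute)
    also have "\<dots> = exp (- c1) ^ L" by (rule exp_of_nat_mult)
    finally show ?thesis using eq by simp
  qed
  have BB: "measure unif_space (BB Nobj X0 L) \<le> q ^ L" for L
    unfolding q_def by (rule BB_bound[OF X0 N])
  have part1: "\<forall>L :: nat.
           measure unif_space {\<omega> \<in> space unif_space. \<forall>l \<le> L. length (pop Nobj X0 \<omega> l) > Nobj}
             \<le> exp (- c1 * (real L - 1))"
  proof
    fix L :: nat
    have "{\<omega> \<in> space unif_space. \<forall>l \<le> L. length (pop Nobj X0 \<omega> l) > Nobj} \<subseteq> BB Nobj X0 L"
      unfolding BB_def by auto
    then have "measure unif_space {\<omega> \<in> space unif_space. \<forall>l \<le> L. length (pop Nobj X0 \<omega> l) > Nobj}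
        \<le> measure unif_space (BB Nobj X0 L)"
      by (rule M.finite_measure_mono[OF _ BB_sets])
    also have "\<dots> \<le> exp (- c1 * real L)" using BB qL by simp
    also have "\<dots> \<le> exp (- c1 * (real L - 1))" using c1 by (simp add: algebra_simps)
    finally show "measure unif_space {\<omega> \<in> space unif_space. \<forall>l \<le> L. length (pop Nobj X0 \<omega> l) > Nobj}
             \<le> exp (- c1 * (real L - 1))" .
  qed
  define NN where "NN = (\<Inter>L. BB Nobj X0 L)"
  have NNsets: "NN \<in> sets unif_space" unfolding NN_def
    by (rule sets.countable_INT) (auto intro: BB_sets)
  have NNle: "measure unif_space NN \<le> q ^ L" for L
  proof -
    have "measure unif_space NN \<le> measure unif_space (BB Nobj X0 L)"
      by (rule M.finite_measure_mono[OF _ BB_sets]) (auto simp: NN_def)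
    then show ?thesis using BB[of L] by linarith
  qed
  have "measure unif_space NN = 0"
  proof (rule ccontr)
    assume "measure unif_space NN \<noteq> 0"
    then have "measure unif_space NN > 0" using measure_nonneg[of unif_space NN] by linarith
    then obtain n where "q ^ n < measure unif_space NN" using real_arch_pow_inv[OF _ q1] by blast
    then show False using NNle[of n] by linarith
  qed
  then have NN0: "emeasure unif_space NN = 0" by (simp add: M.emeasure_eq_measure)
  have "AE \<omega> in unif_space. \<exists>j \<ge> 1. length (pop Nobj X0 \<omega> j) \<le> Nobj"
  proof (rule AE_I[OF _ NN0 NNsets])
    show "{\<omega> \<in> space unif_space. \<not> (\<exists>j\<ge>1. length (pop Nobj X0 \<omega> j) \<le> Nobj)} \<subseteq> NN"
      unfolding NN_def BB_def by auto
  qed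
  then show ?thesis using part1 c1 by blast
qed

end
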